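(* Let $q\geq 3$ be an odd prime power and $m\geq 2$. Then the second largest odd coset leader modulo $q^m-1$ is $$\delta_2=(q-1)q^{m-1}-q^{\lfloor\frac{2m-1}{3}\rfloor}-q^{\lfloor\frac{m-1}{3}\rfloor}-1.$$
   Context: The $q$-cyclotomic coset of $i$ modulo $q^m-1$ is $\{i,iq,iq^2,\ldots\}\bmod(q^m-1)$; its smallest element is its coset leader. An odd coset leader is a coset leader that is an odd integer. *)

theory Defs
  imports "HOL-Computational_Algebra.Primes"
begin

definition cyc_coset :: "nat \<Rightarrow> nat \<Rightarrow> nat \<Rightarrow> nat set" where
  "cyc_coset q m i = {(i * q ^ j) mod (q ^ m - 1) | j. True}"

definition coset_leader :: "nat \<Rightarrow> nat \<Rightarrow> nat \<Rightarrow> bool" where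
  "coset_leader q m i \<longleftrightarrow> i < q ^ m - 1 \<and> (\<forall>x \<in> cyc_coset q m i. i \<le> x)"

definition odd_coset_leaders :: "nat \<Rightarrow> nat \<Rightarrow> nat set" where
  "odd_coset_leaders q m = {i. coset_leader q m i \<and> odd i}"

definition prime_power :: "nat \<Rightarrow> bool" where
  "prime_power q \<longleftrightarrow> (\<exists>p k. prime p \<and> k \<ge> 1 \<and> q = p ^ k)"

end

theory Submission
  imports Defs
begin

lemma rot:
  fixes q m p A B y :: nat
  assumes q: "q \<ge> 2" and p: "0 < p" "p < m" and y: "y = A*q^p + B" and B: "B < q^p"
    and yn: "y < q^m - 1"
  shows "(y * q^(m-p)) mod (q^m - 1) = B*q^(m-p) + A"
proof -
  define X where "X = q^(m-p)"
  define Y where "Y = q^p"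
  have XY: "X*Y = q^m" unfolding X_def Y_def using p by (simp add: power_add[symmetric])
  have X1: "X \<ge> 1" "Y \<ge> 1" using q by (auto simp: X_def Y_def)
  have yXY: "y + 1 < X*Y" using yn XY X1 by (metis Nat.less_diff_conv)
  have "A*Y \<le> y" using y Y_def by simp
  hence "A*Y < X*Y" using yXY by linarith
  hence AX: "A < X" by simp
  have key: "A + B*X + 1 < X*Y"
  proof (cases "A + 1 < X")
    case True
    have "(B+1)*X \<le> Y*X" using B Y_def by (intro mult_le_mono1) simp
    thus ?thesis using True by (simp add: algebra_simps)
  next
    case False
    hence A1: "A + 1 = X" using AX by simp
    have "B + 1 \<noteq> Y"
    proof
      assume "B + 1 = Y"
      hence "y + 1 = (A+1)*Y" using y Y_def by (simp add: algebra_simps)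
      hence "y + 1 = X*Y" using A1 by (metis)
      thus False using yXY by simp
    qed
    hence "B + 1 < Y" using B Y_def by simp
    hence "(B+1)*X < Y*X" unfolding mult_less_cancel2 using X1 by simp
    thus ?thesis using A1 by (simp add: algebra_simps)
  qed
  have "y * q^(m-p) = A*(q^m - 1) + (B*X + A)"
  proof -
    have "y * q^(m-p) = A*(X*Y) + B*X" using y by (simp add: X_def Y_def algebra_simps)
    also have "... = A*(q^m - 1) + A + B*X" using XY X1
      by (metis (no_types, lifting) add.commute add_diff_inverse_nat diff_add_inverse2 less_one mult.commute mult_eq_if not_less_zero yXY)
    finally show ?thesis by simp
  qed
  moreover have "B*X + A < q^m - 1" using key XY by linarith
  ultimately show ?thesis by (simp add: X_def)
qed

lemma coprime_n:
  fixes q m j :: nat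
  assumes "q \<ge> 2" "m \<ge> 1"
  shows "coprime (q^m - 1) (q^j)"
proof -
  have "coprime (q^m - 1) (q^m)" by (rule coprime_diff_one_left_nat) (use assms in simp)
  moreover have "q^m = q * q^(m-1)" using assms by (simp add: power_eq_if)
  ultimately have "coprime (q^m - 1) q" by (metis coprime_mult_right_iff)
  thus ?thesis by simp
qed

lemma leader_iff:
  fixes q m x :: nat
  assumes q: "q \<ge> 2" and m: "m \<ge> 1" and x: "0 < x" "x < q^m - 1"
  shows "coset_leader q m x \<longleftrightarrow> (\<forall>j. ((q^m-1-x) * q^j) mod (q^m-1) \<le> q^m-1-x)"
proof -
  define n where "n = q^m - 1"
  have xn: "0 < x" "x < n" using x n_def by auto
  have key: "x \<le> (x*q^j) mod n \<longleftrightarrow> ((n-x)*q^j) mod n \<le> n-x" for j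
  proof -
    define A where "A = (x*q^j) mod n"
    define B where "B = ((n-x)*q^j) mod n"
    have cop: "coprime n (q^j)" using coprime_n[OF q m] n_def by simp
    have An: "A < n" "B < n" using xn by (auto simp: A_def B_def)
    have A0: "A \<noteq> 0"
    proof
      assume "A = 0"
      hence "n dvd x*q^j" by (simp add: A_def mod_eq_0_iff_dvd)
      hence "n dvd x" using cop coprime_dvd_mult_left_iff by blast
      thus False using xn by (simp add: nat_dvd_not_less)
    qed
    have B0: "B \<noteq> 0"
    proof
      assume "B = 0"
      hence "n dvd (n-x)*q^j" by (simp add: B_def mod_eq_0_iff_dvd)
      hence "n dvd (n-x)" using cop coprime_dvd_mult_left_iff by blast
      thus False using xn by (simp add: nat_dvd_not_less)
    qed
    have "(A + B) mod n = (x*q^j + (n-x)*q^j) mod n" unfolding A_def B_def by (simp add: mod_add_eq)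
    also have "x*q^j + (n-x)*q^j = n*q^j" using xn by (simp add: add_mult_distrib[symmetric])
    finally have "n dvd (A+B)" by (simp add: dvd_eq_mod_eq_0)
    then obtain c where c: "A + B = n*c" by blast
    have "c = 1"
    proof -
      have "c \<noteq> 0" using c A0 by (metis add_eq_0_iff_both_eq_0 mult_0_right)
      moreover have "c < 2" using c An by (metis add_less_mono mult_2_right nat_mult_less_cancel_disj)
      ultimately show ?thesis by simp
    qed
    hence "A + B = n" using c by simp
    thus ?thesis unfolding A_def[symmetric] B_def[symmetric] using xn by linarith
  qed
  show ?thesis unfolding coset_leader_def cyc_coset_def n_def[symmetric] using key xn by auto
qed

lemma P_intro:
  fixes q m y :: nat
  assumes q: "q \<ge> 3" and m: "m \<ge> 1" and y: "y < q^m - 1"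
    and R: "\<And>p. 0 < p \<Longrightarrow> p < m \<Longrightarrow> (y*q^(m-p)) mod (q^m-1) \<le> y"
  shows "(y * q^j) mod (q^m-1) \<le> y"
proof -
  define n where "n = q^m - 1"
  have "q^m \<ge> q" using q m by (simp add: self_le_power)
  hence n1: "n > 1" using q n_def by simp
  have "q^m = n + 1" using n1 n_def by simp
  hence qm: "q^m mod n = 1" using n1 by (simp add: mod_Suc)
  have "q^j = (q^m)^(j div m) * q^(j mod m)"
    by (metis power_add power_mult mult_div_mod_eq)
  hence "(y*q^j) mod n = (y*q^(j mod m) * (q^m)^(j div m)) mod n" by (simp only: ac_simps)
  also have "... = (y*q^(j mod m) * ((q^m)^(j div m) mod n)) mod n" by (simp add: mod_mult_right_eq)
  also have "(q^m)^(j div m) mod n = 1"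
  proof -
    have "(q^m)^(j div m) mod n = ((q^m) mod n)^(j div m) mod n" by (simp add: power_mod)
    thus ?thesis using qm n1 by simp
  qed
  finally have e: "(y*q^j) mod n = (y*q^(j mod m)) mod n" by simp
  show ?thesis
  proof (cases "j mod m = 0")
    case True thus ?thesis using e y n_def by simp
  next
    case False
    define p where "p = m - j mod m"
    have "0 < p" "p < m" "m - p = j mod m" using False m by (auto simp: p_def)
    thus ?thesis using e R[of p] n_def by simp
  qed
qed

lemma pmul: "i \<le> k \<Longrightarrow> (q::nat)^(k-i) * q^i = q^k"
  by (simp add: power_add[symmetric])

lemma three_le: "(q::nat) \<ge> 3 \<Longrightarrow> k \<ge> 1 \<Longrightarrow> 3 * q^(k-1) \<le> q^k"
  using pmul[of 1 k q] by (metis mult.commute mult_le_mono2 power_one_right)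

lemma D3:
  fixes q m a b j :: nat
  assumes q: "q \<ge> 3" and m: "m \<ge> 3" and ab: "3*a + 1 \<le> 2*m" "2*m < 3*a+4" "3*b+1 \<le> m" "m < 3*b+4"
  shows "((q^(m-1)+q^a+q^b) * q^j) mod (q^m-1) \<le> q^(m-1)+q^a+q^b"
proof -
  define y where "y = q^(m-1)+q^a+q^b"
  have q1: "1 < q" using q by simp
  have fa: "b < a" "a < m-1" "a + b \<ge> m-2" "a+b \<le> m-1" "a \<le> 2*b+1" "b+m-1 \<le> 2*a" using ab m by linarith+
  have q3a: "3*q^((m-1)-1) \<le> q^(m-1)" using three_le[OF q, of "m-1"] m by simp
  have "(m-1)-1 = m-2" by simp
  hence q3: "3*q^(m-2) \<le> q^(m-1)" using q3a by metis
  have q3': "3*q^(m-1) \<le> q^m" using three_le[OF q, of m] m by simp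
  have ya: "q^a \<le> q^(m-2)" "q^b \<le> q^(m-2)" using fa q1 by simp_all
  have "1 \<le> q^(m-2)" using q1 by simp
  hence "y + 1 < q^m" using ya q3 q3' y_def by linarith
  hence yn: "y < q^m - 1" by linarith
  show ?thesis unfolding y_def[symmetric]
  proof (rule P_intro[OF q _ yn])
    show "1 \<le> m" using m by simp
  next
    fix p assume p: "0<p" "p<m"
    consider "p \<le> b" | "b < p" "p \<le> a" | "a < p" by linarith
    then show "(y*q^(m-p)) mod (q^m-1) \<le> y"
    proof cases
      case 1
      have dec: "y = (q^(m-1-p)+q^(a-p)+q^(b-p))*q^p + 0"
        using 1 fa pmul[of p "m-1" q] pmul[of p a q] pmul[of p b q] by (simp add: y_def algebra_simps)
      have "(y*q^(m-p)) mod (q^m-1) = 0*q^(m-p) + (q^(m-1-p)+q^(a-p)+q^(b-p))"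
        using rot[OF _ p dec _ yn] q by simp
      moreover have "q^(m-1-p) \<le> q^(m-1)" "q^(a-p) \<le> q^a" "q^(b-p) \<le> q^b" using q1 by simp_all
      ultimately show ?thesis unfolding y_def by simp
    next
      case 2
      have dec: "y = (q^(m-1-p)+q^(a-p))*q^p + q^b"
        using 2 fa pmul[of p "m-1" q] pmul[of p a q] by (simp add: y_def algebra_simps)
      have r: "(y*q^(m-p)) mod (q^m-1) = q^b*q^(m-p) + (q^(m-1-p)+q^(a-p))"
        using rot[OF _ p dec _ yn] q 2 q1 by simp
      have e1: "q^b*q^(m-p) = q^(b+(m-p))" by (simp add: power_add)
      show ?thesis
      proof (cases "p = b+1")
        case True
        have e2: "q^(b + (m-p)) = q^(m-1)" using True p by simp
        show ?thesis
        proof (cases "m-1-p < a")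
          case True
          have "q^(m-1-p) \<le> q^(a-1)" "q^(a-p) \<le> q^(a-1)" using True q1 p fa by simp_all
          moreover have "3*q^(a-1) \<le> q^a" using three_le[OF q, of a] fa by simp
          ultimately show ?thesis using r e1 e2 unfolding y_def by linarith
        next
          case False
          hence "m-1-p = a" using fa \<open>p = b+1\<close> by linarith
          hence "q^(m-1-p) = q^a" by simp
          moreover have "q^(a-p) \<le> q^b" using q1 fa \<open>p = b+1\<close> by simp
          ultimately show ?thesis using r e1 e2 unfolding y_def by linarith
        qed
      next
        case False
        have "q^(b+(m-p)) \<le> q^(m-2)" "q^(m-1-p) \<le> q^(m-2)" "q^(a-p) \<le> q^(m-2)"
          using False 2 p fa q1 by simp_all
        thus ?thesis using r e1 q3 unfolding y_def by linarith
      qed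
    next
      case 3
      have dec: "y = q^(m-1-p)*q^p + (q^a+q^b)"
        using 3 p fa pmul[of p "m-1" q] by (simp add: y_def algebra_simps)
      have lt: "q^a+q^b < q^p"
      proof -
        have "q^a + q^b \<le> 2*q^a" using fa q1 by simp
        also have "... < 3*q^a" using q1 by simp
        also have "... \<le> q^(a+1)" using three_le[OF q, of "a+1"] by simp
        also have "... \<le> q^p" using 3 q1 by (intro power_increasing) auto
        finally show ?thesis .
      qed
      have r: "(y*q^(m-p)) mod (q^m-1) = (q^a+q^b)*q^(m-p) + q^(m-1-p)"
        using rot[OF _ p dec lt yn] q by simp
      have e1: "(q^a+q^b)*q^(m-p) = q^(a+(m-p)) + q^(b+(m-p))" by (simp add: power_add algebra_simps)
      show ?thesis
      proof (cases "p = a+1")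
        case True
        have e2: "q^(a + (m-p)) = q^(m-1)" using True p by simp
        show ?thesis
        proof (cases "b+(m-p) < a")
          case True
          have "q^(b+(m-p)) \<le> q^(a-1)" "q^(m-1-p) \<le> q^(a-1)" using True q1 p fa \<open>p = a+1\<close> by simp_all
          moreover have "3*q^(a-1) \<le> q^a" using three_le[OF q, of a] fa by simp
          ultimately show ?thesis using r e1 e2 unfolding y_def by linarith
        next
          case False
          hence "b+(m-p) = a" using fa \<open>p = a+1\<close> by linarith
          hence "q^(b+(m-p)) = q^a" by simp
          moreover have "q^(m-1-p) \<le> q^b" using q1 fa \<open>p = a+1\<close> by simp
          ultimately show ?thesis using r e1 e2 unfolding y_def by linarith
        qed
      next
        case False
        have "q^(a+(m-p)) \<le> q^(m-2)" "q^(b+(m-p)) \<le> q^(m-2)" "q^(m-1-p) \<le> q^(m-2)"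
          using False 3 p fa q1 by simp_all
        thus ?thesis using r e1 q3 unfolding y_def by linarith
      qed
    qed
  qed
qed

lemma rotP:
  fixes q m p A B y :: nat
  assumes q: "q \<ge> 2" and p: "0 < p" "p < m" and y: "y = A*q^p + B" and B: "B < q^p"
    and yn: "y < q^m - 1" and P: "\<forall>j. (y*q^j) mod (q^m-1) \<le> y"
  shows "B*q^(m-p) + A \<le> y"
  using rot[OF q p y B yn] P by metis

lemma lowdig:
  fixes q r :: nat
  assumes q: "q \<ge> 2"
  shows "r > 0 \<Longrightarrow> \<exists>l u. r = q^l * u \<and> \<not> q dvd u"
proof (induction r rule: less_induct)
  case (less r)
  show ?case
  proof (cases "q dvd r")
    case False thus ?thesis by (intro exI[of _ 0] exI[of _ r]) simp
  next
    case True
    then obtain s where s: "r = q*s" by blast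
    have "s < r" "s > 0" using s less.prems q by auto
    then obtain l u where "s = q^l*u" "\<not> q dvd u" using less.IH by blast
    thus ?thesis using s by (intro exI[of _ "Suc l"] exI[of _ u]) auto
  qed
qed

lemma U3:
  fixes q m a b y :: nat
  assumes q: "q \<ge> 3" "odd q" and m: "m \<ge> 3" and ab: "3*a + 1 \<le> 2*m" "2*m < 3*a+4" "3*b+1 \<le> m" "m < 3*b+4"
    and y0: "0 < y" and yb: "y < q^(m-1)+q^a+q^b" and yodd: "odd y"
    and P: "\<forall>j. (y*q^j) mod (q^m-1) \<le> y"
  shows "y = q^(m-1)"
proof -
  have q1: "1 < q" and q2: "q \<ge> 2" using q by simp_all
  have fa: "b < a" "a < m-1" "a + b \<ge> m-2" "a+b \<le> m-1" "a \<ge> 2*b" using ab m by linarith+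
  have q3a: "3*q^((m-1)-1) \<le> q^(m-1)" using three_le[OF q(1), of "m-1"] m by simp
  have "(m-1)-1 = m-2" by simp
  hence q3: "3*q^(m-2) \<le> q^(m-1)" using q3a by metis
  have q3': "3*q^(m-1) \<le> q^m" using three_le[OF q(1), of m] m by simp
  have ya: "q^a \<le> q^(m-2)" "q^b \<le> q^(m-2)" using fa q1 by simp_all
  have "1 \<le> q^(m-2)" using q1 by simp
  hence "y + 1 < q^m" using ya q3 q3' yb by linarith
  hence yn: "y < q^m - 1" by linarith
  have ybig: "y \<ge> q^(m-1)"
  proof (rule ccontr)
    assume "\<not> ?thesis"
    hence ys: "y < q^(m-1)" by simp
    obtain k where k: "q^k \<le> y" "y < q^(k+1)" using ex_power_ivl1[OF q2, of y] y0 by auto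
    have "q^k < q^(m-1)" using k ys by linarith
    hence km: "k + 1 \<le> m - 1" using q1 by simp
    have dec: "y = 0 * q^(k+1) + y" by simp
    have "y*q^(m-(k+1)) + 0 \<le> y" using rotP[OF q2 _ _ dec k(2) yn P] km by simp
    moreover have "q^k * q^(m-(k+1)) \<le> y*q^(m-(k+1))" using k by simp
    moreover have "q^k * q^(m-(k+1)) = q^(m-1)" using km by (simp add: power_add[symmetric])
    ultimately show False using ys by linarith
  qed
  define r where "r = y - q^(m-1)"
  have yr: "y = q^(m-1) + r" using ybig r_def by simp
  have rb: "r < q^a + q^b" using yr yb by simp
  have oq: "odd (q^(m-1))" "odd (q^a)" "odd (q^b)" using q by simp_all
  have reven: "even r" using yr yodd oq by auto
  show ?thesis
  proof (cases "r = 0")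
    case True thus ?thesis using yr by simp
  next
    case False
    obtain k where k: "q^k \<le> r" "r < q^(k+1)" using ex_power_ivl1[OF q2, of r] False by auto
    have ka: "k \<le> a"
    proof (rule ccontr)
      assume "\<not> k \<le> a"
      hence "q^(a+1) \<le> q^k" using q1 by (intro power_increasing) auto
      moreover have "3*q^a \<le> q^(a+1)" using three_le[OF q(1), of "a+1"] by simp
      moreover have "q^b \<le> q^a" using fa q1 by simp
      ultimately show False using k rb by linarith
    qed
    have km: "k + 1 < m" using ka fa by linarith
    have dec1: "y = q^(m-2-k) * q^(k+1) + r"
      using yr km pmul[of "k+1" "m-1" q] by (simp add: algebra_simps)
    have R1: "r*q^(m-(k+1)) + q^(m-2-k) \<le> y" using rotP[OF q2 _ km dec1 k(2) yn P] by simp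
    define c where "c = r div q^k"
    define r' where "r' = r mod q^k"
    have rc: "r = c*q^k + r'" unfolding c_def r'_def by (rule div_mult_mod_eq[symmetric])
    have r'k: "r' < q^k" using q1 by (simp add: r'_def)
    have c1: "c \<ge> 1" using k(1) q1 div_le_mono[of "q^k" r "q^k"] by (simp add: c_def)
    have ekk: "q^k * q^(m-(k+1)) = q^(m-1)" using km by (simp add: power_add[symmetric])
    have c2: "c = 1"
    proof (rule ccontr)
      assume "c \<noteq> 1"
      hence "2 \<le> c" using c1 by simp
      hence "2*q^(m-1) \<le> c*q^(m-1)" by simp
      also have "... \<le> r*q^(m-(k+1))" using rc ekk by (simp add: algebra_simps)
      finally have "2*q^(m-1) \<le> y" using R1 by linarith
      moreover have "q^(k+1) \<le> q^(m-1)" using km q1 by (intro power_increasing) auto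
      ultimately show False using yr k by linarith
    qed
    have rr: "r = q^k + r'" using rc c2 by simp
    have st: "r'*q^(m-(k+1)) + q^(m-2-k) \<le> q^k + r'"
      using R1 yr rr ekk by (simp add: algebra_simps)
    have r'odd: "odd r'" using reven rr oq q by simp
    hence r'0: "r' > 0" by (cases r') auto
    obtain l u where lu: "r' = q^l * u" "\<not> q dvd u" using lowdig[OF q2 r'0] by blast
    have u0: "u > 0" using lu by (cases u) auto
    have qlr: "q^l \<le> r'" using lu u0 by simp
    have lk: "l < k" using qlr r'k q1 by (metis le_less_trans power_strict_increasing_iff)
    have lg: "l + (m-(k+1)) \<le> k"
    proof (rule ccontr)
      assume "\<not> ?thesis"
      hence "q^(k+1) \<le> q^(l + (m-(k+1)))" using q1 by (intro power_increasing) auto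
      also have "... = q^l * q^(m-(k+1))" by (simp add: power_add)
      also have "... \<le> r' * q^(m-(k+1))" using qlr by simp
      finally have "q^(k+1) \<le> q^k + r'" using st by linarith
      moreover have "3*q^k \<le> q^(k+1)" using three_le[OF q(1), of "k+1"] by simp
      ultimately show False using r'k by linarith
    qed
    have um: "u mod q < q" "u mod q \<ge> 1" using q1 lu(2) by (simp_all add: mod_greater_zero_iff_not_dvd[symmetric] Suc_le_eq)
    have dec2: "y = (q^(m-2-l) + q^(k-l-1) + u div q) * q^(l+1) + q^l * (u mod q)"
    proof -
      have "q^(m-2-l) * q^(l+1) = q^(m-1)" using pmul[of "l+1" "m-1" q] lk km by (simp add: algebra_simps)
      moreover have "q^(k-l-1) * q^(l+1) = q^k" using pmul[of "l+1" k q] lk by (simp add: algebra_simps)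
      moreover have "(u div q) * q^(l+1) + q^l * (u mod q) = r'"
      proof -
        have "(u div q) * q^(l+1) + q^l * (u mod q) = q^l * (q * (u div q) + u mod q)"
          by (simp only: distrib_left power_add power_one_right ac_simps)
        also have "... = r'" by (simp only: mult_div_mod_eq lu(1))
        finally show ?thesis .
      qed
      ultimately show ?thesis using yr rr by (simp add: algebra_simps)
    qed
    have B2: "q^l * (u mod q) < q^(l+1)" using um by simp
    have R2: "q^l * (u mod q) * q^(m-(l+1)) + (q^(m-2-l) + q^(k-l-1) + u div q) \<le> y"
      using rotP[OF q2 _ _ dec2 B2 yn P] lk km by simp
    have "q^(m-1) \<le> q^l * (u mod q) * q^(m-(l+1))"
    proof -
      have "q^(m-1) = q^l * q^(m-(l+1))" using lk km by (simp add: power_add[symmetric])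
      also have "... \<le> q^l * (u mod q) * q^(m-(l+1))" using um by simp
      finally show ?thesis .
    qed
    hence st2: "q^(m-2-l) + q^(k-l-1) \<le> q^k + r'" using R2 yr rr by linarith
    have ml: "m-2-l \<le> k"
    proof (rule ccontr)
      assume "\<not> ?thesis"
      hence "q^(k+1) \<le> q^(m-2-l)" using q1 by (intro power_increasing) auto
      moreover have "3*q^k \<le> q^(k+1)" using three_le[OF q(1), of "k+1"] by simp
      ultimately show False using st2 r'k by linarith
    qed
    have kaa: "k = a" using ka ml lg ab km lk by linarith
    have r'b: "r' < q^b" using rb rr kaa by simp
    have lb: "l < b" using qlr r'b q1 by (metis le_less_trans power_strict_increasing_iff)
    have "m-2-l = k" using ml lb kaa fa by linarith
    hence "q^(k-l-1) \<le> r'" using st2 by simp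
    hence "q^(k-l-1) < q^b" using r'b by linarith
    hence "k-l-1 < b" using q1 by simp
    thus ?thesis using kaa lb fa by linarith
  qed
qed

lemma Pq:
  fixes q m j :: nat
  assumes q: "q \<ge> 3" and m: "m \<ge> 1"
  shows "(q^(m-1) * q^j) mod (q^m-1) \<le> q^(m-1)"
proof -
  have q1: "1 < q" using q by simp
  have "3*q^(m-1) \<le> q^m" using three_le[OF q m] .
  moreover have "1 \<le> q^(m-1)" using q1 by simp
  ultimately have yn: "q^(m-1) < q^m - 1" by linarith
  show ?thesis
  proof (rule P_intro[OF q m yn])
    fix p assume p: "0 < p" "p < m"
    have dec: "q^(m-1) = q^(m-1-p)*q^p + 0" using p pmul[of p "m-1" q] by simp
    have "(q^(m-1)*q^(m-p)) mod (q^m-1) = 0*q^(m-p) + q^(m-1-p)"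
      using rot[OF _ p dec _ yn] q by simp
    thus "(q^(m-1)*q^(m-p)) mod (q^m-1) \<le> q^(m-1)" using q1 by simp
  qed
qed

lemma D2:
  fixes q j :: nat
  assumes q: "q \<ge> 3"
  shows "((2*q+1) * q^j) mod (q^2-1) \<le> 2*q+1"
proof -
  have "3*q \<le> q*q" using q by simp
  hence "2*q+1 < q*q - 1" using q by linarith
  hence yn: "2*q+1 < q^2 - 1" by (simp add: power2_eq_square)
  show ?thesis
  proof (rule P_intro[OF q _ yn])
    fix p :: nat assume p: "0 < p" "p < 2"
    hence p1: "p = 1" by simp
    have dec: "2*q+1 = 2*q^p + 1" using p1 by simp
    have "((2*q+1)*q^(2-p)) mod (q^2-1) = 1*q^(2-p) + 2"
      using rot[OF _ p dec _ yn] q p1 by simp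
    thus "((2*q+1)*q^(2-p)) mod (q^2-1) \<le> 2*q+1" using p1 q by simp
  qed simp
qed

lemma U2:
  fixes q y :: nat
  assumes q: "q \<ge> 3" "odd q" and y0: "0 < y" and yb: "y < 2*q+1" and yodd: "odd y"
    and P: "\<forall>j. (y*q^j) mod (q^2-1) \<le> y"
  shows "y = q"
proof -
  have q2: "q \<ge> 2" using q by simp
  have "3*q \<le> q*q" using q by simp
  hence "y < q*q - 1" using q yb by linarith
  hence yn: "y < q^2 - 1" by (simp add: power2_eq_square)
  define y1 where "y1 = y div q"
  define y0 where "y0 = y mod q"
  have dec: "y = y1*q^1 + y0" by (simp add: y1_def y0_def)
  have y0q: "y0 < q^1" using q by (simp add: y0_def)
  have R: "y0*q^(2-1) + y1 \<le> y" using rotP[OF q2 _ _ dec y0q yn P] by simp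
  hence R': "y0*q + y1 \<le> y1*q + y0" using dec by simp
  have "y1 * q \<le> y" using dec by simp
  hence "y1*q < 3*q" using yb q by linarith
  hence y13: "y1 < 3" by simp
  have "y1 \<noteq> 0"
  proof
    assume "y1 = 0"
    hence "y0*q \<le> y0" using R' by simp
    moreover have "y0 > 0" using y0 dec \<open>y1 = 0\<close> by simp
    ultimately show False using q by simp
  qed
  moreover have "y1 \<noteq> 2"
  proof
    assume "y1 = 2"
    hence "y0 = 0" using dec yb by simp
    thus False using dec \<open>y1 = 2\<close> yodd by simp
  qed
  ultimately have "y1 = 1" using y13 by linarith
  hence R2: "y0*q \<le> q + y0 - 1" using R' by simp
  have "y0 \<le> 1"
  proof (rule ccontr)
    assume "\<not> y0 \<le> 1"
    hence "2*(q-1) \<le> y0*(q-1)" by (intro mult_le_mono1) simp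
    moreover have "y0*q = y0*(q-1) + y0" using q by (cases q) auto
    ultimately show False using R2 q by linarith
  qed
  moreover have "y0 \<noteq> 1" using dec \<open>y1 = 1\<close> yodd q by auto
  ultimately show ?thesis using dec \<open>y1 = 1\<close> by simp
qed

theorem lemma18:
  fixes q m :: nat
  assumes "prime_power q" and "odd q" and "q \<ge> 3" and "m \<ge> 2"
  shows "\<exists>d. int d = (int q - 1) * int q ^ (m - 1) - int q ^ ((2 * m - 1) div 3)
                     - int q ^ ((m - 1) div 3) - 1
           \<and> d \<in> odd_coset_leaders q m
           \<and> card {x \<in> odd_coset_leaders q m. d < x} = 1"
proof -
  note q = assms(3) and qo = assms(2) and m = assms(4)
  have q1: "1 < q" and q2: "q \<ge> 2" and m1: "m \<ge> 1" using q m by simp_all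
  define n where "n = q^m - 1"
  define a where "a = (2*m-1) div 3"
  define b where "b = (m-1) div 3"
  define yd where "yd = q^(m-1) + q^a + q^b"
  have ab: "3*a + 1 \<le> 2*m" "2*m < 3*a+4" "3*b+1 \<le> m" "m < 3*b+4"
    unfolding a_def b_def using m by presburger+
  have qm: "q^m = q * q^(m-1)" using m1 by (simp add: power_eq_if)
  have oq: "odd (q^(m-1))" "odd (q^a)" "odd (q^b)" "odd (q^m)" using qo by simp_all
  have neven: "even n" using oq(4) n_def by simp
  have ydodd: "odd yd" using oq(1-3) unfolding yd_def even_add by blast
  have ydP: "\<forall>j. (yd*q^j) mod n \<le> yd"
  proof
    fix j
    show "(yd*q^j) mod n \<le> yd"
    proof (cases "m = 2")
      case True
      have "a = 1" "b = 0" using True by (simp_all add: a_def b_def)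
      hence "yd = 2*q+1" using True by (simp add: yd_def)
      thus ?thesis using D2[OF q, of j] True n_def by simp
    next
      case False
      thus ?thesis using D3[OF q _ ab, of j] m n_def yd_def by simp
    qed
  qed
  have ydn: "yd < n"
  proof -
    have "q^a \<le> q^(m-1)" "q^b < q^(m-1)" using ab q1 m by simp_all
    hence "yd < 3*q^(m-1)" using yd_def by simp
    also have "... \<le> q^m" using qm q by simp
    finally have "yd < q^m" .
    moreover have "yd \<noteq> n" using ydodd neven by auto
    moreover have "q^m = n + 1" using q1 n_def by simp
    ultimately show ?thesis by linarith
  qed
  define d where "d = n - yd"
  have q0: "q^(m-1) > 0" using q1 by simp
  have dpos: "0 < d" "d < n" using ydn q0 yd_def d_def by auto
  have ndy: "n = d + yd" using ydn d_def by simp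
  have dodd: "odd d" using neven ydodd unfolding ndy even_add by blast
  have dlead: "coset_leader q m d"
  proof -
    have "n - d = yd" using ndy by simp
    thus ?thesis using leader_iff[OF q2 m1 dpos(1)] dpos(2) ydP n_def by simp
  qed
  have dL: "d \<in> odd_coset_leaders q m" using dlead dodd by (simp add: odd_coset_leaders_def)
  have deq: "int d = (int q - 1) * int q ^ (m - 1) - int q ^ ((2 * m - 1) div 3)
                     - int q ^ ((m - 1) div 3) - 1"
  proof -
    have "int n = int q ^ m - 1" using q1 n_def by (simp add: of_nat_diff)
    hence "int d = int q ^ m - 1 - (int q ^ (m-1) + int q ^ a + int q ^ b)"
      using ndy yd_def by simp
    moreover have "int q ^ m = int q * int q ^ (m-1)" using qm by (metis of_nat_mult of_nat_power)
    ultimately show ?thesis unfolding a_def b_def by (simp add: algebra_simps)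
  qed
  define e where "e = n - q^(m-1)"
  have qlt: "q^(m-1) < n"
  proof -
    have "3*q^(m-1) \<le> q^m" using qm q by simp
    thus ?thesis using q0 n_def by linarith
  qed
  have epos: "0 < e" "e < n" using qlt q0 e_def by auto
  have ne: "n = e + q^(m-1)" using qlt e_def by simp
  have eodd: "odd e" using neven oq(1) unfolding ne even_add by blast
  have elead: "coset_leader q m e"
  proof -
    have "n - e = q^(m-1)" using ne by simp
    thus ?thesis using leader_iff[OF q2 m1 epos(1)] epos(2) Pq[OF q m1] n_def by simp
  qed
  have eL: "e \<in> odd_coset_leaders q m" using elead eodd by (simp add: odd_coset_leaders_def)
  have de: "d < e" using ndy ne yd_def q0 q1 by simp
  have S: "{x \<in> odd_coset_leaders q m. d < x} = {e}"
  proof (intro equalityI subsetI)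
    fix x assume "x \<in> {x \<in> odd_coset_leaders q m. d < x}"
    hence xL: "coset_leader q m x" "odd x" "d < x" by (auto simp: odd_coset_leaders_def)
    have xn: "x < n" using xL(1) n_def by (simp add: coset_leader_def)
    have x0: "0 < x" using xL(3) by simp
    define y where "y = n - x"
    have P: "\<forall>j. (y*q^j) mod (q^m-1) \<le> y"
      using leader_iff[OF q2 m1 x0] xL(1) xn n_def y_def by simp
    have nxy: "n = x + y" using xn y_def by simp
    have yodd: "odd y" using neven xL(2) unfolding nxy even_add by blast
    have y0: "0 < y" using xn y_def by simp
    have yb: "y < yd" using xL(3) ndy nxy by simp
    have "y = q^(m-1)"
    proof (cases "m = 2")
      case True
      have "a = 1" "b = 0" using True by (simp_all add: a_def b_def)
      hence "yd = 2*q+1" using True by (simp add: yd_def)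
      thus ?thesis using U2[OF q qo y0 _ yodd] yb P True by simp
    next
      case False
      thus ?thesis using U3[OF q qo _ ab y0 _ yodd P] m yb yd_def by simp
    qed
    thus "x \<in> {e}" using nxy ne by simp
  next
    fix x assume "x \<in> {e}"
    thus "x \<in> {x \<in> odd_coset_leaders q m. d < x}" using eL de by simp
  qed
  show ?thesis using deq dL S by (intro exI[of _ d]) simp
qed

end
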